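(* Let $K\ge2$, let $\mathbf{p}$ be a probability vector on $[K]$ with all $p_k>0$, let $\mathbf{W}$ be a $K\times K$ invertible row-stochastic matrix, and let $\hat{\mathbf{p}}_n$, $\check{\mathbf{p}}_n$ be as in the context. For a positive integer $\rho$ and $k\in[K]$ define $\hat\mu^{(\rho)}_{n,k}=n^\rho\mathbb{E}[(\hat p_{n,k}-p_k)^\rho]$ and $\check\mu^{(\rho)}_{n,k}=n^\rho\mathbb{E}[(\check p_{n,k}-p_k)^\rho]$. Then there is a constant $C>0$ (not depending on $n$) such that for all $n$, $$\big|\hat\mu^{(\rho)}_{n,k}-\check\mu^{(\rho)}_{n,k}\big|\le C\,n^\rho e^{-nD(\partial\mathbb{P}\mathbf{W}\Vert\mathbf{p}\mathbf{W})}.$$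
   Context: Setting: $X_1,\dots,X_n$ i.i.d. with law $\mathbf{p}$; each passed independently through $\mathbf{W}$ ($\Pr\{Y_i=\ell\mid X_i=k\}=W_{k,\ell}$), giving $\mathbf{y}_n$ with empirical distribution $\mathbf{t}(\mathbf{y}_n)$; $\check{\mathbf{p}}_n=\mathbf{t}(\mathbf{y}_n)\mathbf{W}^{-1}$ and $\hat{\mathbf{p}}_n=\mathrm{Proj}_{\mathbb{P}}(\check{\mathbf{p}}_n)$, where $\mathrm{Proj}_{\mathbb{P}}$ is a fixed map from vectors with entries summing to one into the probability simplex $\mathbb{P}$ with $\mathrm{Proj}_{\mathbb{P}}(\mathbf{v})=\mathbf{v}$ on $\mathbb{P}$. $\partial\mathbb{P}=\{\mathbf{r}\in\mathbb{P}:r_i=0\text{ for some }i\}$ and $D(\partial\mathbb{P}\mathbf{W}\Vert\mathbf{p}\mathbf{W})=\inf_{\mathbf{r}\in\partial\mathbb{P}}D(\mathbf{r}\mathbf{W}\Vert\mathbf{p}\mathbf{W})$ with $D$ the Kullback–Leibler divergence. *)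

theory Defs
  imports "HOL-Analysis.Analysis"
begin

definition prob_simplex :: "(real^'k::finite) set" where
  "prob_simplex = {r. (\<forall>i. r$i \<ge> 0) \<and> sum (\<lambda>i. r$i) UNIV = 1}"

definition prob_simplex_boundary :: "(real^'k::finite) set" where
  "prob_simplex_boundary = {r \<in> prob_simplex. \<exists>i. r$i = 0}"

definition row_stochastic :: "real^'k^'k::finite \<Rightarrow> bool" where
  "row_stochastic W \<longleftrightarrow> (\<forall>i j. W$i$j \<ge> 0) \<and> (\<forall>i. sum (\<lambda>j. W$i$j) UNIV = 1)"

definition KL :: "real^'k::finite \<Rightarrow> real^'k \<Rightarrow> real" where
  "KL q s = (\<Sum>l\<in>UNIV. if q$l = 0 then 0 else q$l * ln (q$l / s$l))"

definition D_boundary :: "real^'k::finite \<Rightarrow> real^'k^'k \<Rightarrow> real" where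
  "D_boundary p W = (INF r\<in>prob_simplex_boundary. KL (r v* W) (p v* W))"

text \<open>Empirical distribution (type) of the output sequence y_1..y_n (indices 0..n-1).\<close>
definition emp_dist :: "nat \<Rightarrow> (nat \<Rightarrow> 'k::finite) \<Rightarrow> real^'k" where
  "emp_dist n y = (\<chi> l. real (card {i. i < n \<and> y i = l}) / real n)"

text \<open>Expectation of a functional g of the output sequence, where X_1..X_n are i.i.d. with
  law p and each Y_i is obtained from X_i through the channel W independently.\<close>
definition expect_out :: "real^'k::finite \<Rightarrow> real^'k^'k \<Rightarrow> nat \<Rightarrow> ((nat \<Rightarrow> 'k) \<Rightarrow> real) \<Rightarrow> real" where
  "expect_out p W n g =
     (\<Sum>x\<in>PiE {..<n} (\<lambda>_. UNIV). \<Sum>y\<in>PiE {..<n} (\<lambda>_. UNIV).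
        (\<Prod>i<n. p$(x i) * W$(x i)$(y i)) * g y)"

definition check_est :: "real^'k^'k \<Rightarrow> nat \<Rightarrow> (nat \<Rightarrow> 'k::finite) \<Rightarrow> real^'k" where
  "check_est W n y = emp_dist n y v* matrix_inv W"

end

theory Submission
  imports Defs
begin


lemma tangent_ln:
  fixes u v c :: real assumes "u > 0" "v > 0" "c > 0"
  shows "v * ln (v / c) + (ln (v / c) + 1) * (u - v) \<le> u * ln (u / c)"
proof -
  have "ln (v / u) \<le> v / u - 1" using assms by (intro ln_le_minus_one) simp
  hence "u * ln (v / u) \<le> u * (v / u - 1)" using assms by (intro mult_left_mono) auto
  moreover have "u * (v / u - 1) = v - u" using assms by (simp add: field_simps)
  moreover have "u * ln (v / u) = u * (ln v - ln u)" using assms by (simp add: ln_div)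
  ultimately have "u * (ln v - ln u) \<le> v - u" by simp
  thus ?thesis using assms by (simp add: ln_div algebra_simps)
qed

definition hterm :: "real \<Rightarrow> real \<Rightarrow> real" where
  "hterm x c = (if x = 0 then 0 else x * ln (x / c))"

lemma hterm_convex:
  fixes x c \<mu> :: real assumes "c > 0" "x \<ge> 0" "0 \<le> \<mu>" "\<mu> \<le> 1"
  shows "hterm (\<mu> * c + (1 - \<mu>) * x) c \<le> (1 - \<mu>) * hterm x c"
proof -
  define y where "y = \<mu> * c + (1 - \<mu>) * x"
  have y0: "y \<ge> 0" using assms unfolding y_def by simp
  show ?thesis
  proof (cases "y = 0")
    case True
    then have "\<mu> * c = 0" "(1 - \<mu>) * x = 0" using assms unfolding y_def
      by (smt (verit) mult_nonneg_nonneg)+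
    then have "\<mu> = 0" using assms by simp
    then have "x = 0" using \<open>(1 - \<mu>) * x = 0\<close> by simp
    have "hterm (\<mu> * c + (1 - \<mu>) * x) c = 0" using True y_def by (simp add: hterm_def)
    then show ?thesis using \<open>x = 0\<close> by (simp add: hterm_def)
  next
    case False
    hence ypos: "y > 0" using y0 by simp
    have hy: "hterm (\<mu> * c + (1 - \<mu>) * x) c = y * ln (y / c)" using ypos by (simp add: hterm_def y_def)
    show ?thesis
    proof (cases "x = 0")
      case True
      hence "y = \<mu> * c" unfolding y_def by simp
      hence mu: "\<mu> > 0" using ypos assms by (smt (verit) mult_nonpos_nonneg)
      have "y * ln (y / c) = \<mu> * c * ln \<mu>" using \<open>y = \<mu> * c\<close> assms by simp
      also have "\<dots> \<le> 0" using mu assms by (intro mult_nonneg_nonpos) auto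
      finally show ?thesis using True hy by (simp add: hterm_def)
    next
      case False
      hence xpos: "x > 0" using assms by simp
      have t1: "y * ln (y / c) + (ln (y / c) + 1) * (c - y) \<le> c * ln (c / c)"
        using tangent_ln[OF assms(1) ypos assms(1)] .
      have t2: "y * ln (y / c) + (ln (y / c) + 1) * (x - y) \<le> x * ln (x / c)"
        using tangent_ln[OF xpos ypos assms(1)] .
      have "\<mu> * (y * ln (y / c) + (ln (y / c) + 1) * (c - y)) + (1 - \<mu>) * (y * ln (y / c) + (ln (y / c) + 1) * (x - y))
          \<le> \<mu> * (c * ln (c / c)) + (1 - \<mu>) * (x * ln (x / c))"
        using t1 t2 assms by (intro add_mono mult_left_mono) auto
      moreover have "\<mu> * (y * ln (y / c) + (ln (y / c) + 1) * (c - y)) + (1 - \<mu>) * (y * ln (y / c) + (ln (y / c) + 1) * (x - y))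
          = y * ln (y / c) + (ln (y / c) + 1) * (\<mu> * c + (1 - \<mu>) * x - y)"
        by (simp add: algebra_simps)
      ultimately have "y * ln (y / c) \<le> (1 - \<mu>) * (x * ln (x / c))"
        using assms by (simp add: y_def)
      thus ?thesis using xpos hy by (simp add: hterm_def)
    qed
  qed
qed

lemma hterm_gibbs:
  fixes x c :: real assumes "c > 0" "x \<ge> 0"
  shows "x - c \<le> hterm x c"
proof (cases "x = 0")
  case True thus ?thesis using assms by (simp add: hterm_def)
next
  case False
  hence xp: "x > 0" using assms by simp
  have "ln (c / x) \<le> c / x - 1" using xp assms by (intro ln_le_minus_one) simp
  hence "x * ln (c / x) \<le> x * (c / x - 1)" using xp by (intro mult_left_mono) auto
  moreover have "x * (c / x - 1) = c - x" using xp by (simp add: field_simps)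
  moreover have "x * ln (c / x) = x * (ln c - ln x)" using xp assms by (simp add: ln_div)
  ultimately have "x * (ln c - ln x) \<le> c - x" by simp
  thus ?thesis using xp assms False by (simp add: hterm_def ln_div algebra_simps)
qed

lemma KL_hterm: "KL q s = (\<Sum>l\<in>UNIV. hterm (q$l) (s$l))"
  unfolding KL_def hterm_def by simp

lemma KL_lower:
  fixes q s :: "real^'k::finite"
  assumes "\<forall>l. q$l \<ge> 0" "\<forall>l. s$l > 0"
  shows "(\<Sum>l\<in>UNIV. q$l) - (\<Sum>l\<in>UNIV. s$l) \<le> KL q s"
  unfolding KL_hterm sum_subtractf[symmetric]
  using assms by (intro sum_mono hterm_gibbs) auto

lemma KL_convex:
  fixes q s :: "real^'k::finite"
  assumes "\<forall>l. q$l \<ge> 0" "\<forall>l. s$l > 0" "0 \<le> \<mu>" "\<mu> \<le> 1"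
  shows "KL (\<chi> l. \<mu> * s$l + (1 - \<mu>) * q$l) s \<le> (1 - \<mu>) * KL q s"
  unfolding KL_hterm sum_distrib_left
  using assms by (intro sum_mono) (simp add: hterm_convex)



lemma prod_sum_pow:
  fixes f :: "'k::finite \<Rightarrow> real"
  shows "(\<Sum>y\<in>PiE {..<n} (\<lambda>_. UNIV). \<Prod>i<n. f (y i)) = (\<Sum>l\<in>UNIV. f l) ^ n"
  using prod_sum_PiE[of "{..<n}" "\<lambda>_. UNIV" "\<lambda>i v. f v"] by simp

lemma expect_reduce:
  fixes p :: "real^'k::finite" and W :: "real^'k^'k"
  shows "expect_out p W n g = (\<Sum>y\<in>PiE {..<n} (\<lambda>_. UNIV). (\<Prod>i<n. (p v* W)$(y i)) * g y)"
proof -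
  have "expect_out p W n g = (\<Sum>y\<in>PiE {..<n} (\<lambda>_. UNIV). \<Sum>x\<in>PiE {..<n} (\<lambda>_. UNIV).
        (\<Prod>i<n. p$(x i) * W$(x i)$(y i)) * g y)"
    unfolding expect_out_def by (rule sum.swap)
  also have "\<dots> = (\<Sum>y\<in>PiE {..<n} (\<lambda>_. UNIV). (\<Prod>i<n. (p v* W)$(y i)) * g y)"
  proof (rule sum.cong[OF refl])
    fix y :: "nat \<Rightarrow> 'k"
    have "(\<Sum>x\<in>PiE {..<n} (\<lambda>_. UNIV). \<Prod>i<n. p$(x i) * W$(x i)$(y i))
        = (\<Prod>i<n. \<Sum>v\<in>UNIV. p$v * W$v$(y i))"
      using prod_sum_PiE[of "{..<n}" "\<lambda>_. UNIV" "\<lambda>i v. p$v * W$v$(y i)"] by simp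
    also have "\<dots> = (\<Prod>i<n. (p v* W)$(y i))"
      by (simp add: vector_matrix_mult_def)
    finally show "(\<Sum>x\<in>PiE {..<n} (\<lambda>_. UNIV). (\<Prod>i<n. p$(x i) * W$(x i)$(y i)) * g y)
        = (\<Prod>i<n. (p v* W)$(y i)) * g y"
      by (simp add: sum_distrib_right[symmetric])
  qed
  finally show ?thesis .
qed

lemma emp_lin:
  fixes y :: "nat \<Rightarrow> 'k::finite"
  assumes "n > 0"
  shows "(\<Sum>l\<in>UNIV. (emp_dist n y)$l * a l) = (\<Sum>j<n. a (y j)) / real n"
proof -
  have c: "real (card {i. i < n \<and> y i = l}) = (\<Sum>j<n. if y j = l then 1 else 0)" for l
  proof -
    have "{i. i < n \<and> y i = l} = {i\<in>{..<n}. y i = l}" by auto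
    hence "card {i. i < n \<and> y i = l} = card {i\<in>{..<n}. y i = l}" by simp
    also have "real \<dots> = (\<Sum>j\<in>{i\<in>{..<n}. y i = l}. 1)" by simp
    also have "\<dots> = (\<Sum>j<n. if y j = l then 1 else 0)" by (subst sum.inter_filter) auto
    finally show ?thesis .
  qed
  have "(\<Sum>l\<in>UNIV. real (card {i. i < n \<and> y i = l}) * a l) = (\<Sum>l\<in>UNIV. \<Sum>j<n. if y j = l then a l else 0)"
    unfolding c sum_distrib_right by (intro sum.cong refl) (auto intro: sum.cong)
  also have "\<dots> = (\<Sum>j<n. \<Sum>l\<in>UNIV. if y j = l then a l else 0)" by (rule sum.swap)
  also have "\<dots> = (\<Sum>j<n. a (y j))" by simp
  finally have *: "(\<Sum>l\<in>UNIV. real (card {i. i < n \<and> y i = l}) * a l) = (\<Sum>j<n. a (y j))" .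
  have "(\<Sum>l\<in>UNIV. (emp_dist n y)$l * a l) = (\<Sum>l\<in>UNIV. real (card {i. i < n \<and> y i = l}) * a l) / real n"
    unfolding emp_dist_def by (simp add: sum_divide_distrib)
  thus ?thesis using * by simp
qed

lemma chernoff:
  fixes \<pi> :: "'k::finite \<Rightarrow> real" and a :: "'k \<Rightarrow> real"
  assumes "\<forall>l. \<pi> l \<ge> 0" "t \<ge> 0"
  shows "(\<Sum>y\<in>PiE {..<n} (\<lambda>_. UNIV). (\<Prod>i<n. \<pi> (y i)) * (if (\<Sum>j<n. a (y j)) < 0 then 1 else 0))
         \<le> (\<Sum>l\<in>UNIV. \<pi> l * exp (- t * a l)) ^ n"
proof -
  have "(\<Sum>y\<in>PiE {..<n} (\<lambda>_. UNIV). (\<Prod>i<n. \<pi> (y i)) * (if (\<Sum>j<n. a (y j)) < 0 then 1 else 0))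
     \<le> (\<Sum>y\<in>PiE {..<n} (\<lambda>_. UNIV). (\<Prod>i<n. \<pi> (y i)) * exp (- t * (\<Sum>j<n. a (y j))))"
  proof (rule sum_mono)
    fix y :: "nat \<Rightarrow> 'k"
    have pp: "(\<Prod>i<n. \<pi> (y i)) \<ge> 0" using assms by (intro prod_nonneg) auto
    have "(if (\<Sum>j<n. a (y j)) < 0 then 1 else 0) \<le> exp (- t * (\<Sum>j<n. a (y j)))"
    proof (cases "(\<Sum>j<n. a (y j)) < 0")
      case True
      hence "0 \<le> - t * (\<Sum>j<n. a (y j))" using assms by (simp add: mult_nonneg_nonpos less_imp_le)
      thus ?thesis using True by simp
    qed auto
    thus "(\<Prod>i<n. \<pi> (y i)) * (if (\<Sum>j<n. a (y j)) < 0 then 1 else 0)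
        \<le> (\<Prod>i<n. \<pi> (y i)) * exp (- t * (\<Sum>j<n. a (y j)))"
      using pp by (rule mult_left_mono)
  qed
  also have "\<dots> = (\<Sum>y\<in>PiE {..<n} (\<lambda>_. UNIV). \<Prod>i<n. \<pi> (y i) * exp (- t * a (y i)))"
    by (simp add: sum_distrib_left exp_sum prod.distrib)
  also have "\<dots> = (\<Sum>l\<in>UNIV. \<pi> l * exp (- t * a l)) ^ n"
    by (rule prod_sum_pow)
  finally show ?thesis .
qed

lemma tilt_exists:
  fixes \<pi> a :: "'k::finite \<Rightarrow> real"
  assumes "\<forall>l. \<pi> l > 0" "a l0 < 0" "(\<Sum>l\<in>UNIV. \<pi> l * a l) > 0"
  shows "\<exists>t\<ge>0. (\<Sum>l\<in>UNIV. \<pi> l * a l * exp (- t * a l)) = 0"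
proof -
  define \<psi> where "\<psi> t = (\<Sum>l\<in>UNIV. \<pi> l * a l * exp (- t * a l))" for t
  define S where "S = (\<Sum>l\<in>UNIV. \<pi> l * \<bar>a l\<bar>)"
  define c where "c = - a l0"
  have cpos: "c > 0" using assms unfolding c_def by simp
  have S0: "S \<ge> 0" unfolding S_def using assms by (intro sum_nonneg) (simp add: less_imp_le)
  define b where "b = S / (\<pi> l0 * c^2)"
  have bpos: "b \<ge> 0" unfolding b_def using S0 cpos assms by (intro divide_nonneg_pos) (auto intro: mult_pos_pos)
  have "\<psi> b = \<pi> l0 * a l0 * exp (- b * a l0) + (\<Sum>l\<in>UNIV - {l0}. \<pi> l * a l * exp (- b * a l))"
    unfolding \<psi>_def by (simp add: sum.remove)
  also have "(\<Sum>l\<in>UNIV - {l0}. \<pi> l * a l * exp (- b * a l)) \<le> (\<Sum>l\<in>UNIV - {l0}. \<pi> l * \<bar>a l\<bar>)"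
  proof (rule sum_mono)
    fix l
    have "a l * exp (- b * a l) \<le> \<bar>a l\<bar>"
    proof (cases "a l > 0")
      case True
      hence "exp (- b * a l) \<le> 1" using bpos by (simp add: mult_nonneg_nonneg)
      thus ?thesis using True by (simp add: mult_left_le)
    next
      case False
      hence "a l * exp (- b * a l) \<le> 0" by (simp add: mult_nonpos_nonneg)
      thus ?thesis by linarith
    qed
    thus "\<pi> l * a l * exp (- b * a l) \<le> \<pi> l * \<bar>a l\<bar>"
      using assms(1) by (metis mult.assoc mult_left_mono less_imp_le)
  qed
  also have "(\<Sum>l\<in>UNIV - {l0}. \<pi> l * \<bar>a l\<bar>) \<le> S"
    unfolding S_def using assms(1) by (intro sum_mono2) (auto simp: less_imp_le)
  also have "\<pi> l0 * a l0 * exp (- b * a l0) \<le> - S"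
  proof -
    have "1 + b * c \<le> exp (b * c)" by simp
    moreover have "\<pi> l0 * c \<ge> 0" using assms cpos by (simp add: less_imp_le)
    ultimately have "\<pi> l0 * c * (1 + b * c) \<le> \<pi> l0 * c * exp (b * c)"
      by (intro mult_left_mono) auto
    moreover have "\<pi> l0 * c * (1 + b * c) = \<pi> l0 * c + S"
      unfolding b_def using assms(1)[rule_format, of l0] cpos by (simp add: field_simps power2_eq_square)
    moreover have "\<pi> l0 * c > 0" using assms cpos by simp
    ultimately have "S \<le> \<pi> l0 * c * exp (b * c)" by linarith
    thus ?thesis unfolding c_def by simp
  qed
  finally have "\<psi> b \<le> 0" by simp
  moreover have "\<psi> 0 \<ge> 0" unfolding \<psi>_def using assms by simp
  moreover have "continuous_on {0..b} \<psi>" unfolding \<psi>_def by (intro continuous_intros)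
  ultimately obtain x where "0 \<le> x" "x \<le> b" "\<psi> x = 0"
    using IVT2'[of \<psi> b 0 0] bpos by blast
  thus ?thesis unfolding \<psi>_def by blast
qed



lemma inv_facts:
  fixes W :: "real^'k::finite^'k"
  assumes "invertible W"
  shows "W ** matrix_inv W = mat 1" "matrix_inv W ** W = mat 1"
proof -
  have "\<exists>A'. W ** A' = mat 1 \<and> A' ** W = mat 1" using assms unfolding invertible_def by blast
  hence "W ** matrix_inv W = mat 1 \<and> matrix_inv W ** W = mat 1"
    unfolding matrix_inv_def by (rule someI_ex)
  thus "W ** matrix_inv W = mat 1" "matrix_inv W ** W = mat 1" by auto
qed

lemma sum_vm:
  fixes x :: "real^'k::finite" and A :: "real^'k^'k"
  assumes "\<forall>i. (\<Sum>l\<in>UNIV. A$i$l) = 1"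
  shows "(\<Sum>l\<in>UNIV. (x v* A)$l) = (\<Sum>i\<in>UNIV. x$i)"
proof -
  have "(\<Sum>l\<in>UNIV. (x v* A)$l) = (\<Sum>l\<in>UNIV. \<Sum>i\<in>UNIV. x$i * A$i$l)"
    by (simp add: vector_matrix_mult_def)
  also have "\<dots> = (\<Sum>i\<in>UNIV. x$i * (\<Sum>l\<in>UNIV. A$i$l))"
    by (subst sum.swap) (simp add: sum_distrib_left)
  also have "\<dots> = (\<Sum>i\<in>UNIV. x$i)" using assms by simp
  finally show ?thesis .
qed

lemma inv_rowsum:
  fixes W :: "real^'k::finite^'k"
  assumes "row_stochastic W" "invertible W"
  shows "\<forall>i. (\<Sum>l\<in>UNIV. (matrix_inv W)$i$l) = 1"
proof
  fix i
  define one :: "real^'k" where "one = (\<chi> _. 1)"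
  have "W *v one = one" using assms(1) unfolding row_stochastic_def one_def
    by (simp add: matrix_vector_mult_def vec_eq_iff)
  hence "matrix_inv W *v one = one"
    using inv_facts[OF assms(2)] by (metis matrix_vector_mul_assoc matrix_vector_mul_lid)
  hence "(matrix_inv W *v one)$i = 1" unfolding one_def by simp
  thus "(\<Sum>l\<in>UNIV. (matrix_inv W)$i$l) = 1" unfolding one_def by (simp add: matrix_vector_mult_def)
qed

lemma pi_pos:
  fixes p :: "real^'k::finite" and W :: "real^'k^'k"
  assumes "\<forall>i. p$i > 0" "row_stochastic W" "invertible W"
  shows "\<forall>l. (p v* W)$l > 0"
proof
  fix l
  have "\<exists>j. W$j$l \<noteq> 0"
  proof (rule ccontr)
    assume "\<not> ?thesis"
    hence "(matrix_inv W ** W)$l$l = 0" by (simp add: matrix_matrix_mult_def)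
    thus False using inv_facts(2)[OF assms(3)] by (simp add: mat_def)
  qed
  then obtain j where "W$j$l \<noteq> 0" by blast
  hence wj: "W$j$l > 0" using assms(2) unfolding row_stochastic_def by (metis less_le)
  have "p$j * W$j$l \<le> (\<Sum>i\<in>UNIV. p$i * W$i$l)"
    using assms unfolding row_stochastic_def
    by (intro member_le_sum) (auto intro: mult_nonneg_nonneg less_imp_le)
  moreover have "p$j * W$j$l > 0" using wj assms by simp
  ultimately show "(p v* W)$l > 0" by (simp add: vector_matrix_mult_def)
qed

lemma vm_nonneg:
  fixes r :: "real^'k::finite" and W :: "real^'k^'k"
  assumes "\<forall>i. r$i \<ge> 0" "row_stochastic W"
  shows "\<forall>l. (r v* W)$l \<ge> 0"
  using assms unfolding row_stochastic_def vector_matrix_mult_def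
  by (auto intro!: sum_nonneg)

lemma boundary_bound:
  fixes p q :: "real^'k::finite" and W :: "real^'k^'k"
  assumes pP: "p \<in> prob_simplex" and ppos: "\<forall>i. p$i > 0" and rs: "row_stochastic W"
    and pipos: "\<forall>l. (p v* W)$l > 0"
    and qs: "(\<Sum>i\<in>UNIV. q$i) = 1" and qi0: "q$i0 = 0" and sn: "\<forall>l. (q v* W)$l \<ge> 0"
  shows "D_boundary p W \<le> KL (q v* W) (p v* W)"
proof -
  have rows: "\<forall>i. (\<Sum>l\<in>UNIV. W$i$l) = 1" using rs unfolding row_stochastic_def by simp
  have psum: "(\<Sum>i\<in>UNIV. p$i) = 1" using pP unfolding prob_simplex_def by simp
  have pisum: "(\<Sum>l\<in>UNIV. (p v* W)$l) = 1" using sum_vm[OF rows] psum by simp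
  have bdd: "bdd_below ((\<lambda>r. KL (r v* W) (p v* W)) ` prob_simplex_boundary)"
  proof (rule bdd_belowI2)
    fix r :: "real^'k" assume "r \<in> prob_simplex_boundary"
    hence rn: "\<forall>i. r$i \<ge> 0" unfolding prob_simplex_boundary_def prob_simplex_def by auto
    have "\<forall>l. (r v* W)$l \<ge> 0" using vm_nonneg[OF rn rs] .
    hence "0 \<le> (\<Sum>l\<in>UNIV. (r v* W)$l)" by (simp add: sum_nonneg)
    moreover have "(\<Sum>l\<in>UNIV. (r v* W)$l) - (\<Sum>l\<in>UNIV. (p v* W)$l) \<le> KL (r v* W) (p v* W)"
      using KL_lower \<open>\<forall>l. (r v* W)$l \<ge> 0\<close> pipos by blast
    ultimately show "- 1 \<le> KL (r v* W) (p v* W)" using pisum by linarith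
  qed
  have ssum: "(\<Sum>l\<in>UNIV. (q v* W)$l) = 1" using sum_vm[OF rows] qs by simp
  have gibbs: "0 \<le> KL (q v* W) (p v* W)"
    using KL_lower[OF sn pipos] ssum pisum by simp
  show ?thesis
  proof (cases "\<forall>j. q$j \<ge> 0")
    case True
    hence "q \<in> prob_simplex_boundary" using qs qi0
      unfolding prob_simplex_boundary_def prob_simplex_def by auto
    thus ?thesis unfolding D_boundary_def by (rule cINF_lower[OF bdd])
  next
    case False
    define J where "J = {j. q$j < 0}"
    have Jne: "J \<noteq> {}" using False unfolding J_def by (auto simp: not_le)
    define f where "f j = - q$j / (p$j - q$j)" for j
    define \<mu> where "\<mu> = Max (f ` J)"
    have fin: "finite (f ` J)" by simp
    have "\<mu> \<in> f ` J" unfolding \<mu>_def using fin Jne by (intro Max_in) auto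
    then obtain j0 where j0: "j0 \<in> J" "\<mu> = f j0" by blast
    have fJ: "f j \<le> \<mu>" if "j \<in> J" for j unfolding \<mu>_def using fin that by (intro Max_ge) auto
    have qj0: "q$j0 < 0" using j0 J_def by simp
    have pj0: "p$j0 > 0" using ppos by simp
    have mu0: "\<mu> > 0" using j0 qj0 pj0 unfolding f_def by (simp add: divide_neg_pos)
    have "- q$j0 < 1 * (p$j0 - q$j0)" using pj0 by simp
    hence "- q$j0 / (p$j0 - q$j0) < 1" using qj0 pj0 by (subst pos_divide_less_eq) auto
    hence mu1: "\<mu> < 1" using j0 unfolding f_def by simp
    define r where "r = (\<chi> j. \<mu> * p$j + (1 - \<mu>) * q$j)"
    have rnn: "r$j \<ge> 0" for j
    proof (cases "j \<in> J")
      case True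
      hence qj: "q$j < 0" unfolding J_def by simp
      have pj: "p$j > 0" using ppos by simp
      have "- q$j / (p$j - q$j) \<le> \<mu>" using fJ[OF True] unfolding f_def .
      hence "- q$j \<le> \<mu> * (p$j - q$j)" using qj pj by (subst (asm) pos_divide_le_eq) auto
      thus ?thesis unfolding r_def by (simp add: algebra_simps)
    next
      case False
      hence "q$j \<ge> 0" unfolding J_def by simp
      thus ?thesis unfolding r_def using mu0 mu1 ppos
        by (simp add: add_nonneg_nonneg less_imp_le)
    qed
    have rj0: "r$j0 = 0"
      using j0 qj0 pj0 unfolding r_def f_def by (simp add: field_simps)
    have rsum: "(\<Sum>j\<in>UNIV. r$j) = 1" unfolding r_def
      using psum qs by (simp add: sum.distrib sum_distrib_left[symmetric])
    have rB: "r \<in> prob_simplex_boundary"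
      unfolding prob_simplex_boundary_def prob_simplex_def using rnn rsum rj0 by auto
    have rW: "r v* W = (\<chi> l. \<mu> * (p v* W)$l + (1 - \<mu>) * (q v* W)$l)"
      unfolding r_def vector_matrix_mult_def
      by (simp add: vec_eq_iff sum.distrib[symmetric] sum_distrib_left algebra_simps)
    have "D_boundary p W \<le> KL (r v* W) (p v* W)"
      unfolding D_boundary_def by (rule cINF_lower[OF bdd rB])
    also have "\<dots> \<le> (1 - \<mu>) * KL (q v* W) (p v* W)"
      unfolding rW using KL_convex[OF sn pipos] mu0 mu1 by simp
    also have "\<dots> \<le> KL (q v* W) (p v* W)" using gibbs mu0 mu1
      by (simp add: mult_left_le_one_le)
    finally show ?thesis .
  qed
qed

lemma tilt_KL:
  fixes \<pi> :: "real^'k::finite" and a :: "'k \<Rightarrow> real"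
  assumes "\<forall>l. \<pi>$l > 0" "(\<Sum>l\<in>UNIV. \<pi>$l * a l * exp (- t * a l)) = 0"
  defines "Z \<equiv> (\<Sum>l\<in>UNIV. \<pi>$l * exp (- t * a l))"
  shows "Z > 0" "KL (\<chi> l. \<pi>$l * exp (- t * a l) / Z) \<pi> = - ln Z"
    "(\<Sum>l\<in>UNIV. (\<chi> l. \<pi>$l * exp (- t * a l) / Z)$l * a l) = 0"
    "(\<Sum>l\<in>UNIV. (\<chi> l. \<pi>$l * exp (- t * a l) / Z)$l) = 1"
proof -
  show Zp: "Z > 0" unfolding Z_def using assms(1)
    by (intro sum_pos) auto
  define s where "s = (\<chi> l. \<pi>$l * exp (- t * a l) / Z)"
  have sa: "(\<Sum>l\<in>UNIV. s$l * a l) = 0" unfolding s_def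
    using assms(2) by (simp add: sum_divide_distrib[symmetric] algebra_simps)
  have s1: "(\<Sum>l\<in>UNIV. s$l) = 1" unfolding s_def using Zp
    by (simp add: sum_divide_distrib[symmetric] Z_def)
  have "KL s \<pi> = (\<Sum>l\<in>UNIV. s$l * (- t * a l - ln Z))"
    unfolding KL_def
  proof (rule sum.cong[OF refl])
    fix l
    have pl: "\<pi>$l > 0" using assms(1) by simp
    have spos: "s$l > 0" unfolding s_def using pl Zp by simp
    have "s$l / \<pi>$l = exp (- t * a l) / Z" unfolding s_def using pl by simp
    hence "ln (s$l / \<pi>$l) = - t * a l - ln Z" using Zp by (simp add: ln_div)
    thus "(if s$l = 0 then 0 else s$l * ln (s$l / \<pi>$l)) = s$l * (- t * a l - ln Z)"
      using spos by simp
  qed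
  also have "\<dots> = - t * (\<Sum>l\<in>UNIV. s$l * a l) - ln Z * (\<Sum>l\<in>UNIV. s$l)"
    by (simp add: algebra_simps sum_subtractf sum_distrib_left)
  also have "\<dots> = - ln Z" using sa s1 by simp
  finally show "KL (\<chi> l. \<pi>$l * exp (- t * a l) / Z) \<pi> = - ln Z" unfolding s_def .
  show "(\<Sum>l\<in>UNIV. (\<chi> l. \<pi>$l * exp (- t * a l) / Z)$l * a l) = 0" using sa unfolding s_def .
  show "(\<Sum>l\<in>UNIV. (\<chi> l. \<pi>$l * exp (- t * a l) / Z)$l) = 1" using s1 unfolding s_def .
qed



lemma simplex_coord:
  fixes r :: "real^'k::finite"
  assumes "r \<in> prob_simplex"
  shows "0 \<le> r$i" "r$i \<le> 1"
proof -
  show "0 \<le> r$i" using assms unfolding prob_simplex_def by auto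
  have "r$i \<le> (\<Sum>j\<in>UNIV. r$j)" using assms unfolding prob_simplex_def
    by (intro member_le_sum) auto
  thus "r$i \<le> 1" using assms unfolding prob_simplex_def by auto
qed

theorem lemma12:
  fixes p :: "real^'k::finite" and W :: "real^'k^'k"
    and Proj :: "real^'k \<Rightarrow> real^'k" and \<rho> :: nat and k :: 'k
  assumes "CARD('k) \<ge> 2"
    and "p \<in> prob_simplex" and "\<forall>i. p$i > 0"
    and "row_stochastic W" and "invertible W"
    and "\<forall>v. sum (\<lambda>i. v$i) UNIV = 1 \<longrightarrow> Proj v \<in> prob_simplex"
    and "\<forall>v\<in>prob_simplex. Proj v = v"
    and "\<rho> > 0"
  shows "\<exists>C>0. \<forall>n::nat.
     \<bar>real n ^ \<rho> * expect_out p W n (\<lambda>y. ((Proj (check_est W n y))$k - p$k) ^ \<rho>)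
      - real n ^ \<rho> * expect_out p W n (\<lambda>y. ((check_est W n y)$k - p$k) ^ \<rho>)\<bar>
     \<le> C * real n ^ \<rho> * exp (- real n * D_boundary p W)"
proof -
  note pP = assms(2) and ppos = assms(3) and rs = assms(4) and inv = assms(5)
    and projP = assms(6) and projid = assms(7) and rho = assms(8)
  define \<pi> where "\<pi> = p v* W"
  define M where "M = matrix_inv W"
  define Mb where "Mb = (\<Sum>l\<in>UNIV. \<bar>M$l$k\<bar>)"
  define B where "B = 1 + (Mb + 1) ^ \<rho>"
  define C where "C = B * real CARD('k)"
  have Mb0: "Mb \<ge> 0" unfolding Mb_def by (intro sum_nonneg) auto
  have Bpos: "B > 0" unfolding B_def using Mb0 by (simp add: add_pos_nonneg)
  have Cpos: "C > 0" unfolding C_def using Bpos by simp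
  have pipos: "\<forall>l. \<pi>$l > 0" unfolding \<pi>_def using pi_pos[OF ppos rs inv] .
  have pinn: "\<forall>l. \<pi>$l \<ge> 0" using pipos by (simp add: less_imp_le)
  have Mrows: "\<forall>i. (\<Sum>l\<in>UNIV. M$i$l) = 1" unfolding M_def using inv_rowsum[OF rs inv] .
  have WM: "W ** M = mat 1" "M ** W = mat 1" unfolding M_def using inv_facts[OF inv] by auto
  define ind where "ind n i y = (if (\<Sum>j<n. M$(y j)$i) < 0 then 1 else 0 :: real)"
    for n :: nat and i :: 'k and y :: "nat \<Rightarrow> 'k"
  have ind0: "ind n i y \<ge> 0" for n i y unfolding ind_def by simp
  have key: "(\<Sum>y\<in>PiE {..<n} (\<lambda>_. UNIV). (\<Prod>j<n. \<pi>$(y j)) * ind n i y)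
      \<le> exp (- real n * D_boundary p W)" for n i
  proof (cases "\<forall>l. M$l$i \<ge> 0")
    case True
    hence "ind n i y = 0" for y unfolding ind_def using True
      by (simp add: sum_nonneg not_less)
    thus ?thesis by simp
  next
    case False
    then obtain l0 where l0: "M$l0$i < 0" by (auto simp: not_le)
    define a where "a l = M$l$i" for l
    have "(\<Sum>l\<in>UNIV. \<pi>$l * a l) = (\<pi> v* M)$i" unfolding a_def vector_matrix_mult_def by simp
    also have "\<dots> = p$i" unfolding \<pi>_def by (simp add: vector_matrix_mul_assoc WM)
    finally have Ea: "(\<Sum>l\<in>UNIV. \<pi>$l * a l) > 0" using ppos by simp
    obtain t where t0: "t \<ge> 0" and tz: "(\<Sum>l\<in>UNIV. \<pi>$l * a l * exp (- t * a l)) = 0"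
      using tilt_exists[of "\<lambda>l. \<pi>$l" a l0] pipos l0 Ea unfolding a_def by auto
    define Z where "Z = (\<Sum>l\<in>UNIV. \<pi>$l * exp (- t * a l))"
    define s where "s = (\<chi> l. \<pi>$l * exp (- t * a l) / Z)"
    have Zp: "Z > 0" and KLs: "KL s \<pi> = - ln Z" and sa: "(\<Sum>l\<in>UNIV. s$l * a l) = 0"
      and s1: "(\<Sum>l\<in>UNIV. s$l) = 1"
      using tilt_KL[OF pipos tz] unfolding Z_def[symmetric] s_def[symmetric] by auto
    have snn: "\<forall>l. s$l \<ge> 0" unfolding s_def using pinn Zp by simp
    define q where "q = s v* M"
    have qs: "(\<Sum>l\<in>UNIV. q$l) = 1" unfolding q_def using sum_vm[OF Mrows] s1 by simp
    have qi: "q$i = 0" unfolding q_def using sa by (simp add: vector_matrix_mult_def a_def)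
    have qW: "q v* W = s" unfolding q_def by (simp add: vector_matrix_mul_assoc WM)
    have "D_boundary p W \<le> KL (q v* W) (p v* W)"
      by (rule boundary_bound[OF pP ppos rs]) (use pipos qs qi qW snn in \<open>auto simp: \<pi>_def\<close>)
    hence Db: "D_boundary p W \<le> - ln Z" using KLs qW by (simp add: \<pi>_def)
    have "Z \<le> exp (- D_boundary p W)"
    proof -
      have "ln Z \<le> - D_boundary p W" using Db by simp
      thus ?thesis using Zp by (metis exp_le_cancel_iff exp_ln)
    qed
    hence "Z ^ n \<le> exp (- D_boundary p W) ^ n" using Zp by (intro power_mono) auto
    also have "\<dots> = exp (- real n * D_boundary p W)"
      by (simp add: exp_of_nat_mult[symmetric])
    finally have Zn: "Z ^ n \<le> exp (- real n * D_boundary p W)" .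
    have "(\<Sum>y\<in>PiE {..<n} (\<lambda>_. UNIV). (\<Prod>j<n. \<pi>$(y j)) * ind n i y) \<le> Z ^ n"
      using chernoff[of "\<lambda>l. \<pi>$l" t n a] pinn t0 unfolding ind_def a_def Z_def by simp
    thus ?thesis using Zn by linarith
  qed
  have pointwise: "\<bar>((Proj (check_est W n y))$k - p$k) ^ \<rho> - ((check_est W n y)$k - p$k) ^ \<rho>\<bar>
      \<le> B * (\<Sum>i\<in>UNIV. ind n i y)" if n0: "n > 0" for n y
  proof -
    define tt where "tt = emp_dist n y"
    define c where "c = check_est W n y"
    have cdef: "c = tt v* M" unfolding c_def tt_def check_est_def M_def ..
    have tnn: "tt$l \<ge> 0" for l unfolding tt_def emp_dist_def by simp
    have t1: "(\<Sum>l\<in>UNIV. tt$l) = 1"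
      using emp_lin[OF n0, of y "\<lambda>_. 1"] n0 unfolding tt_def by simp
    have tle1: "tt$l \<le> 1" for l
    proof -
      have "tt$l \<le> (\<Sum>l\<in>UNIV. tt$l)" using tnn by (intro member_le_sum) auto
      thus ?thesis using t1 by simp
    qed
    have ci: "c$i = (\<Sum>j<n. M$(y j)$i) / real n" for i
      using emp_lin[OF n0, of y "\<lambda>l. M$l$i"] unfolding cdef tt_def
      by (simp add: vector_matrix_mult_def)
    have csum: "(\<Sum>i\<in>UNIV. c$i) = 1" unfolding cdef using sum_vm[OF Mrows] t1 by simp
    show ?thesis
    proof (cases "\<forall>i. c$i \<ge> 0")
      case True
      hence "c \<in> prob_simplex" unfolding prob_simplex_def using csum by auto
      hence "Proj c = c" using projid by auto
      moreover have "0 \<le> B * (\<Sum>i\<in>UNIV. ind n i y)" using Bpos ind0 by (simp add: sum_nonneg)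
      ultimately show ?thesis unfolding c_def[symmetric] by simp
    next
      case False
      then obtain i0 where "c$i0 < 0" by (auto simp: not_le)
      hence "(\<Sum>j<n. M$(y j)$i0) < 0" unfolding ci using n0 by (simp add: divide_less_0_iff)
      hence "ind n i0 y = 1" unfolding ind_def by simp
      hence "1 \<le> (\<Sum>i\<in>UNIV. ind n i y)"
        by (metis member_le_sum ind0 UNIV_I finite)
      hence Bl: "B \<le> B * (\<Sum>i\<in>UNIV. ind n i y)" using Bpos by simp
      have PP: "Proj c \<in> prob_simplex" using projP csum by auto
      have a1: "\<bar>(Proj c)$k - p$k\<bar> \<le> 1"
        using simplex_coord[OF PP, of k] simplex_coord[OF pP, of k] by linarith
      have f1: "\<bar>((Proj c)$k - p$k) ^ \<rho>\<bar> \<le> 1"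
        unfolding power_abs using a1 by (intro power_le_one) auto
      have "\<bar>c$k\<bar> \<le> (\<Sum>l\<in>UNIV. \<bar>tt$l * M$l$k\<bar>)" unfolding cdef vector_matrix_mult_def
        by (simp add: sum_abs)
      also have "\<dots> \<le> Mb" unfolding Mb_def
      proof (rule sum_mono)
        fix l
        have "\<bar>tt$l * M$l$k\<bar> = tt$l * \<bar>M$l$k\<bar>" using tnn[of l] by (simp add: abs_mult)
        also have "\<dots> \<le> 1 * \<bar>M$l$k\<bar>" using tle1[of l] by (intro mult_right_mono) auto
        finally show "\<bar>tt$l * M$l$k\<bar> \<le> \<bar>M$l$k\<bar>" by simp
      qed
      finally have "\<bar>c$k\<bar> \<le> Mb" .
      hence a2: "\<bar>c$k - p$k\<bar> \<le> Mb + 1" using simplex_coord[OF pP, of k] by linarith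
      have f2: "\<bar>(c$k - p$k) ^ \<rho>\<bar> \<le> (Mb + 1) ^ \<rho>"
        unfolding power_abs using a2 by (intro power_mono) auto
      have "\<bar>((Proj c)$k - p$k) ^ \<rho> - (c$k - p$k) ^ \<rho>\<bar> \<le> B"
        unfolding B_def using f1 f2 by linarith
      thus ?thesis using Bl unfolding c_def by linarith
    qed
  qed
  show ?thesis
  proof (intro exI[of _ C] conjI allI Cpos)
    fix n :: nat
    show "\<bar>real n ^ \<rho> * expect_out p W n (\<lambda>y. ((Proj (check_est W n y))$k - p$k) ^ \<rho>)
      - real n ^ \<rho> * expect_out p W n (\<lambda>y. ((check_est W n y)$k - p$k) ^ \<rho>)\<bar>
     \<le> C * real n ^ \<rho> * exp (- real n * D_boundary p W)"
    proof (cases "n = 0")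
      case True
      have z: "real n ^ \<rho> = 0" using True rho by simp
      show ?thesis unfolding z by simp
    next
      case False
      hence n0: "n > 0" by simp
      define w where "w y = (\<Prod>j<n. \<pi>$(y j))" for y :: "nat \<Rightarrow> 'k"
      have w0: "w y \<ge> 0" for y unfolding w_def using pinn by (intro prod_nonneg) auto
      define d where "d y = ((Proj (check_est W n y))$k - p$k) ^ \<rho> - ((check_est W n y)$k - p$k) ^ \<rho>"
        for y
      let ?P = "PiE {..<n} (\<lambda>_. UNIV :: 'k set)"
      have "expect_out p W n (\<lambda>y. ((Proj (check_est W n y))$k - p$k) ^ \<rho>)
          - expect_out p W n (\<lambda>y. ((check_est W n y)$k - p$k) ^ \<rho>) = (\<Sum>y\<in>?P. w y * d y)"
        unfolding expect_reduce w_def d_def \<pi>_def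
        by (simp add: sum_subtractf[symmetric] right_diff_distrib)
      also have "\<bar>\<dots>\<bar> \<le> (\<Sum>y\<in>?P. w y * \<bar>d y\<bar>)"
      proof -
        have "\<bar>\<Sum>y\<in>?P. w y * d y\<bar> \<le> (\<Sum>y\<in>?P. \<bar>w y * d y\<bar>)" by (rule sum_abs)
        also have "\<dots> = (\<Sum>y\<in>?P. w y * \<bar>d y\<bar>)"
          using w0 by (intro sum.cong refl) (simp add: abs_mult)
        finally show ?thesis .
      qed
      also have "\<dots> \<le> (\<Sum>y\<in>?P. w y * (B * (\<Sum>i\<in>UNIV. ind n i y)))"
        using pointwise[OF n0] w0 unfolding d_def by (intro sum_mono mult_left_mono) auto
      also have "\<dots> = B * (\<Sum>i\<in>UNIV. \<Sum>y\<in>?P. w y * ind n i y)"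
        by (subst sum.swap) (simp add: sum_distrib_left algebra_simps)
      also have "\<dots> \<le> B * (\<Sum>i\<in>(UNIV::'k set). exp (- real n * D_boundary p W))"
        using key Bpos unfolding w_def by (intro mult_left_mono sum_mono) auto
      also have "\<dots> = C * exp (- real n * D_boundary p W)" unfolding C_def by simp
      finally have E: "\<bar>expect_out p W n (\<lambda>y. ((Proj (check_est W n y))$k - p$k) ^ \<rho>)
          - expect_out p W n (\<lambda>y. ((check_est W n y)$k - p$k) ^ \<rho>)\<bar> \<le> C * exp (- real n * D_boundary p W)" .
      have "\<bar>real n ^ \<rho> * expect_out p W n (\<lambda>y. ((Proj (check_est W n y))$k - p$k) ^ \<rho>)
      - real n ^ \<rho> * expect_out p W n (\<lambda>y. ((check_est W n y)$k - p$k) ^ \<rho>)\<bar>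
        = real n ^ \<rho> * \<bar>expect_out p W n (\<lambda>y. ((Proj (check_est W n y))$k - p$k) ^ \<rho>)
          - expect_out p W n (\<lambda>y. ((check_est W n y)$k - p$k) ^ \<rho>)\<bar>"
        by (simp add: right_diff_distrib[symmetric] abs_mult)
      also have "\<dots> \<le> real n ^ \<rho> * (C * exp (- real n * D_boundary p W))"
        using E by (intro mult_left_mono) auto
      finally show ?thesis by (simp add: algebra_simps)
    qed
  qed
qed

end
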